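(* For all positive integers $n$ and $k$, \[ 0\le\frac1{n^k}-\frac1{n(n+1)\cdots(n+k-1)}<\frac{k^2}{2n^{k+1}}. \] *)

theory Defs
  imports Complex_Main
begin

end

theory Submission
  imports Defs
begin

lemma Qbounds:
  fixes n k :: nat
  assumes "n \<ge> 1"
  shows "0 \<le> (\<Prod>i<k. real n / real (n + i)) \<and> (\<Prod>i<k. real n / real (n + i)) \<le> 1
     \<and> 1 - real k * (real k - 1) / (2 * real n) \<le> (\<Prod>i<k. real n / real (n + i))"
proof (induction k)
  case 0
  then show ?case by simp
next
  case (Suc k)
  define Q where "Q = (\<Prod>i<k. real n / real (n + i))"
  have IH: "0 \<le> Q" "Q \<le> 1" "1 - real k * (real k - 1) / (2 * real n) \<le> Q"
    using Suc.IH unfolding Q_def by auto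
  have np: "real n > 0" using assms by simp
  have e: "(\<Prod>i<Suc k. real n / real (n + i)) = Q * (real n / real (n + k))"
    unfolding Q_def by simp
  have f0: "0 \<le> real n / real (n + k)" "real n / real (n + k) \<le> 1" using np
    by (auto simp: divide_simps)
  have f1: "real n / real (n + k) = 1 - real k / real (n + k)" using np
    by (simp add: field_simps)
  have f2: "real k / real (n + k) \<le> real k / real n" using np
    by (simp add: frac_le)
  have "Q * (real n / real (n + k)) = Q - Q * (real k / real (n + k))"
    by (subst f1) (simp only: right_diff_distrib mult_1_right)
  also have "\<dots> \<ge> Q - real k / real n"
  proof -
    have "Q * (real k / real (n + k)) \<le> 1 * (real k / real (n + k))"
      using IH by (intro mult_right_mono) auto
    then show ?thesis using f2 by linarith
  qed
  finally have g: "Q * (real n / real (n + k)) \<ge> Q - real k / real n" .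
  have h: "1 - real (Suc k) * (real (Suc k) - 1) / (2 * real n)
      = 1 - real k * (real k - 1) / (2 * real n) - real k / real n"
    using np by (simp add: field_simps)
  show ?case unfolding e
  proof (intro conjI)
    show "0 \<le> Q * (real n / real (n + k))" using IH f0 by simp
    show "Q * (real n / real (n + k)) \<le> 1" using IH f0 mult_le_one[of Q "real n / real (n + k)"] by blast
    show "1 - real (Suc k) * (real (Suc k) - 1) / (2 * real n) \<le> Q * (real n / real (n + k))"
      using IH(3) g h by linarith
  qed
qed

theorem lemma3p8:
  fixes n k :: nat
  assumes "n \<ge> 1" and "k \<ge> 1"
  shows "0 \<le> 1 / real n ^ k - 1 / (\<Prod>i<k. real (n + i))
    \<and> 1 / real n ^ k - 1 / (\<Prod>i<k. real (n + i)) < real k ^ 2 / (2 * real n ^ (k + 1))"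
proof -
  define Q where "Q = (\<Prod>i<k. real n / real (n + i))"
  define P where "P = (\<Prod>i<k. real (n + i))"
  have np: "real n > 0" using assms by simp
  have Pp: "P > 0" unfolding P_def using np by (intro prod_pos) auto
  have QP: "Q = real n ^ k / P" unfolding Q_def P_def
    by (simp add: prod_dividef)
  have B: "0 \<le> Q" "Q \<le> 1" "1 - real k * (real k - 1) / (2 * real n) \<le> Q"
    using Qbounds[OF assms(1), of k] unfolding Q_def by auto
  have nk: "real n ^ k > 0" using np by simp
  have eq: "1 / real n ^ k - 1 / P = (1 - Q) / real n ^ k"
    unfolding QP using nk Pp by (simp add: field_simps)
  have "(1 - Q) / real n ^ k \<le> (real k * (real k - 1) / (2 * real n)) / real n ^ k"
    using B nk by (intro divide_right_mono) auto
  also have "\<dots> = real k * (real k - 1) / (2 * real n ^ (k + 1))"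
    by simp
  also have "\<dots> < real k ^ 2 / (2 * real n ^ (k + 1))"
    using assms np by (intro divide_strict_right_mono) (auto simp: power2_eq_square algebra_simps)
  finally have lt: "1 / real n ^ k - 1 / P < real k ^ 2 / (2 * real n ^ (k + 1))"
    using eq by simp
  have ge: "0 \<le> 1 / real n ^ k - 1 / P" unfolding eq using B nk by simp
  show ?thesis using lt ge unfolding P_def by blast
qed

end
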